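(* Let $K=\mathsf{p}^k$ and let $\mathcal{C}\subset (\mathbb{C}^{\mathsf{p}})^{\otimes n}$ be a subspace with orthonormal basis $\{\psi_\alpha\}_{\alpha\in [K]}$ such that, for some $\gamma>0$, \[ \big|\langle\psi_\alpha| F|\psi_\beta\rangle-\delta_{\alpha,\beta}\langle\psi_1| F|\psi_1\rangle\big|\leq \gamma\, \|F\|\qquad\text{for all }\alpha,\beta\in [K] \] and for every $d$-local operator $F$ on $(\mathbb{C}^{\mathsf{p}})^{\otimes n}$. Let $\delta > K^5\gamma^2$. Then $\mathcal{C}$ is an $(\epsilon,\delta)[[n,k,d]]$-AQEDC with $\epsilon=K^5\gamma^2 \delta^{-1}$.
   Context: An operator on $(\mathbb{C}^\mathsf{p})^{\otimes n}$ is $d$-local if it is of the form $F_S\otimes I_{[n]\setminus S}$ for some set $S\subset[n]$ of $d$ sites (the sites need not be contiguous); $\|\cdot\|$ is the operator norm. For a CPTP map $\mathcal{N}$ on $\mathcal{B}((\mathbb{C}^\mathsf{p})^{\otimes n})$ and a subspace $\mathcal{C}$ with projection $P$, $\mathcal{C}$ is an $(\epsilon,\delta)$-approximate error-detection code for $\mathcal{N}$ if for every unit vector $|\Psi\rangle\in\mathcal{C}$: if $\mathrm{tr}(P\mathcal{N}(|\Psi\rangle\langle\Psi|))\geq\delta$ then $\langle\Psi|\rho_{\mathcal{N},P}|\Psi\rangle\geq 1-\epsilon$, where $\rho_{\mathcal{N},P}=\mathrm{tr}(P\mathcal{N}(|\Psi\rangle\langle\Psi|))^{-1}P\mathcal{N}(|\Psi\rangle\langle\Psi|)P$.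 An $(\epsilon,\delta)[[n,k,d]]$-AQEDC is a $\mathsf{p}^k$-dimensional subspace $\mathcal{C}\subset(\mathbb{C}^\mathsf{p})^{\otimes n}$ which is an $(\epsilon,\delta)$-approximate error-detection code for every CPTP map of the form $\mathcal{N}(\rho)=\sum_{j\in[J]}p_jF_j\rho F_j^\dagger$, where each $F_j$ is $d$-local with $\|F_j\|\le 1$ and $\{p_j\}$ is a probability distribution. *)

theory Defs
  imports "HOL-Analysis.Analysis" "HOL-Library.Function_Algebras"
begin

text \<open>The Hilbert space (C^p)^{tensor n} is modelled by complex-valued functions on the
  computational basis, i.e. on configurations x : {0..<n} -> {0..<p} (extensional).
  Vectors are functions cfg => complex (only values on cfgs p n matter; elements of the
  space are those vanishing outside).  Operators are kernels (matrices) cfg => cfg => complex.\<close>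

type_synonym cfg = "nat \<Rightarrow> nat"
type_synonym qvec = "cfg \<Rightarrow> complex"
type_synonym qop = "cfg \<Rightarrow> cfg \<Rightarrow> complex"

definition cfgs :: "nat \<Rightarrow> nat \<Rightarrow> cfg set" where
  "cfgs p n = {..<n} \<rightarrow>\<^sub>E {..<p}"

definition hilb :: "nat \<Rightarrow> nat \<Rightarrow> qvec set" where
  "hilb p n = {v. \<forall>x. x \<notin> cfgs p n \<longrightarrow> v x = 0}"

definition qscale :: "complex \<Rightarrow> qvec \<Rightarrow> qvec" where
  "qscale c v = (\<lambda>x. c * v x)"

definition qinner :: "nat \<Rightarrow> nat \<Rightarrow> qvec \<Rightarrow> qvec \<Rightarrow> complex" where
  "qinner p n u v = (\<Sum>x\<in>cfgs p n. cnj (u x) * v x)"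

definition qnorm :: "nat \<Rightarrow> nat \<Rightarrow> qvec \<Rightarrow> real" where
  "qnorm p n v = sqrt (\<Sum>x\<in>cfgs p n. (cmod (v x))\<^sup>2)"

definition qapply :: "nat \<Rightarrow> nat \<Rightarrow> qop \<Rightarrow> qvec \<Rightarrow> qvec" where
  "qapply p n F v = (\<lambda>x. if x \<in> cfgs p n then (\<Sum>y\<in>cfgs p n. F x y * v y) else 0)"

definition qmult :: "nat \<Rightarrow> nat \<Rightarrow> qop \<Rightarrow> qop \<Rightarrow> qop" where
  "qmult p n A B = (\<lambda>x z. \<Sum>y\<in>cfgs p n. A x y * B y z)"

definition qadj :: "qop \<Rightarrow> qop" where
  "qadj A = (\<lambda>x y. cnj (A y x))"

definition qtrace :: "nat \<Rightarrow> nat \<Rightarrow> qop \<Rightarrow> complex" where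
  "qtrace p n A = (\<Sum>x\<in>cfgs p n. A x x)"

definition ketbra :: "qvec \<Rightarrow> qvec \<Rightarrow> qop" where
  "ketbra u v = (\<lambda>x y. u x * cnj (v y))"

definition opnorm :: "nat \<Rightarrow> nat \<Rightarrow> qop \<Rightarrow> real" where
  "opnorm p n F = Sup {qnorm p n (qapply p n F v) | v. v \<in> hilb p n \<and> qnorm p n v = 1}"

text \<open>d-local operator: F = F_S \<otimes> I on the complement, for a set S of d sites.\<close>
definition d_local :: "nat \<Rightarrow> nat \<Rightarrow> nat \<Rightarrow> qop \<Rightarrow> bool" where
  "d_local p n d F \<longleftrightarrow> (\<exists>S G. S \<subseteq> {..<n} \<and> card S = d \<and>
     (\<forall>x\<in>cfgs p n. \<forall>y\<in>cfgs p n.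
        F x y = (if (\<forall>i\<in>{..<n} - S. x i = y i) then G (restrict x S) (restrict y S) else 0)))"

definition kraus_channel :: "nat \<Rightarrow> nat \<Rightarrow> 'j set \<Rightarrow> ('j \<Rightarrow> real) \<Rightarrow> ('j \<Rightarrow> qop) \<Rightarrow> qop \<Rightarrow> qop" where
  "kraus_channel p n J pr F \<rho> =
     (\<lambda>x y. \<Sum>j\<in>J. complex_of_real (pr j) * qmult p n (qmult p n (F j) \<rho>) (qadj (F j)) x y)"

definition admissible_noise :: "nat \<Rightarrow> nat \<Rightarrow> nat \<Rightarrow> 'j set \<Rightarrow> ('j \<Rightarrow> real) \<Rightarrow> ('j \<Rightarrow> qop) \<Rightarrow> bool" where
  "admissible_noise p n d J pr F \<longleftrightarrow> finite J \<and> (\<forall>j\<in>J. pr j \<ge> 0) \<and> (\<Sum>j\<in>J. pr j) = 1 \<and>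
     (\<forall>j\<in>J. d_local p n d (F j) \<and> opnorm p n (F j) \<le> 1)"

definition approx_detection_code ::
  "nat \<Rightarrow> nat \<Rightarrow> real \<Rightarrow> real \<Rightarrow> (qop \<Rightarrow> qop) \<Rightarrow> qvec set \<Rightarrow> qop \<Rightarrow> bool" where
  "approx_detection_code p n \<epsilon> \<delta> N C P \<longleftrightarrow>
     (\<forall>\<Psi>\<in>C. qnorm p n \<Psi> = 1 \<longrightarrow>
        (let t = qtrace p n (qmult p n P (N (ketbra \<Psi> \<Psi>)));
             \<rho> = (\<lambda>x y. inverse t * qmult p n (qmult p n P (N (ketbra \<Psi> \<Psi>))) P x y)
         in Re t \<ge> \<delta> \<longrightarrow> Re (qinner p n \<Psi> (qapply p n \<rho> \<Psi>)) \<ge> 1 - \<epsilon>))"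

definition is_projection_onto :: "nat \<Rightarrow> nat \<Rightarrow> qvec set \<Rightarrow> qop \<Rightarrow> bool" where
  "is_projection_onto p n C P \<longleftrightarrow>
     (\<forall>x y. (x \<notin> cfgs p n \<or> y \<notin> cfgs p n) \<longrightarrow> P x y = 0) \<and>
     (\<forall>v\<in>hilb p n. qapply p n P v \<in> C \<and> (\<forall>w\<in>C. qinner p n w (v - qapply p n P v) = 0))"

text \<open>(\<epsilon>,\<delta>)[[n,k,d]]-AQEDC over qudits of dimension p.
  The noise index set ranges over nat (any finite family can be reindexed by naturals).\<close>
definition AQEDC :: "nat \<Rightarrow> real \<Rightarrow> real \<Rightarrow> nat \<Rightarrow> nat \<Rightarrow> nat \<Rightarrow> qvec set \<Rightarrow> bool" where
  "AQEDC p \<epsilon> \<delta> n k d C \<longleftrightarrow>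
     C \<subseteq> hilb p n \<and> module.subspace qscale C \<and> vector_space.dim qscale C = p ^ k \<and>
     (\<forall>P. is_projection_onto p n C P \<longrightarrow>
        (\<forall>(J::nat set) pr F. admissible_noise p n d J pr F \<longrightarrow>
           approx_detection_code p n \<epsilon> \<delta> (kraus_channel p n J pr F) C P))"

end

theory Submission
  imports Defs
begin

lemma qscale_vs: "vector_space qscale"
  by unfold_locales (auto simp: qscale_def fun_eq_iff algebra_simps)

lemma qscale_mod: "module qscale"
  by unfold_locales (auto simp: qscale_def fun_eq_iff algebra_simps)

lemma finite_cfgs: "finite (cfgs p n)"
  by (simp add: cfgs_def finite_PiE)

lemma qinner_lc_right:
  assumes "finite J"
  shows "qinner p n u (\<lambda>x. \<Sum>j\<in>J. c j * v j x) = (\<Sum>j\<in>J. c j * qinner p n u (v j))"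
  unfolding qinner_def by (simp add: sum_distrib_left sum_distrib_right mult_ac sum.swap[of _ J])

lemma qinner_lc_left:
  assumes "finite J"
  shows "qinner p n (\<lambda>x. \<Sum>j\<in>J. c j * v j x) u = (\<Sum>j\<in>J. cnj (c j) * qinner p n (v j) u)"
  unfolding qinner_def by (simp add: sum_distrib_left sum_distrib_right mult_ac sum.swap[of _ J])

lemma qinner_cnj: "qinner p n v u = cnj (qinner p n u v)"
  unfolding qinner_def by (simp add: mult.commute)

lemma qapply_lc:
  assumes "finite J"
  shows "qapply p n F (\<lambda>x. \<Sum>j\<in>J. c j * v j x) = (\<lambda>x. \<Sum>j\<in>J. c j * qapply p n F (v j) x)"
  unfolding qapply_def by (auto simp: fun_eq_iff sum_distrib_left sum_distrib_right mult_ac sum.swap[of _ J])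

lemma qapply_qmult: "qapply p n (qmult p n A B) v = qapply p n A (qapply p n B v)"
  unfolding qapply_def qmult_def
  by (auto simp: fun_eq_iff sum_distrib_left sum_distrib_right mult_ac intro!: sum.cong sum.swap)

lemma qinner_diff_right: "qinner p n u (v - w) = qinner p n u v - qinner p n u w"
  unfolding qinner_def by (simp add: algebra_simps sum_subtractf)

lemma qinner_add_right: "qinner p n u (v + w) = qinner p n u v + qinner p n u w"
  unfolding qinner_def by (simp add: algebra_simps sum.distrib)

lemma qinner_scale_right: "qinner p n u (qscale c v) = c * qinner p n u v"
  unfolding qinner_def qscale_def by (simp add: algebra_simps sum_distrib_left)

lemma qinner_zero_right: "qinner p n u 0 = 0"
  unfolding qinner_def by simp

lemma sum_fun_app: "(\<Sum>v\<in>S. (f v :: 'a \<Rightarrow> 'b::comm_monoid_add)) x = (\<Sum>v\<in>S. f v x)"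
  by (induction S rule: infinite_finite_induct) auto

lemma span_repr:
  assumes orth: "\<forall>\<alpha><(K::nat). \<forall>\<beta><K. qinner p n (\<psi> \<alpha>) (\<psi> \<beta>) = (if \<alpha> = \<beta> then 1 else 0)"
    and v: "v \<in> module.span qscale (\<psi> ` {..<K})"
  shows "v = (\<lambda>x. \<Sum>\<alpha><K. qinner p n (\<psi> \<alpha>) v * \<psi> \<alpha> x)"
proof -
  let ?T = "{v. \<forall>z. v z = (\<Sum>\<alpha><K. qinner p n (\<psi> \<alpha>) v * \<psi> \<alpha> z)}"
  have sub: "module.subspace qscale ?T"
    unfolding module.subspace_def[OF qscale_mod]
  proof (intro conjI ballI allI)
    show "0 \<in> ?T" by (simp add: qinner_zero_right)
  next
    fix x y assume hx: "x \<in> ?T" and hy: "y \<in> ?T"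
    show "x + y \<in> ?T"
    proof (intro CollectI allI)
      fix z
      have "(x + y) z = (\<Sum>\<alpha><K. qinner p n (\<psi> \<alpha>) x * \<psi> \<alpha> z) + (\<Sum>\<alpha><K. qinner p n (\<psi> \<alpha>) y * \<psi> \<alpha> z)"
        using hx hy by simp
      also have "\<dots> = (\<Sum>\<alpha><K. qinner p n (\<psi> \<alpha>) (x + y) * \<psi> \<alpha> z)"
        by (simp add: qinner_add_right algebra_simps sum.distrib)
      finally show "(x + y) z = (\<Sum>\<alpha><K. qinner p n (\<psi> \<alpha>) (x + y) * \<psi> \<alpha> z)" .
    qed
  next
    fix c x assume hx: "x \<in> ?T"
    show "qscale c x \<in> ?T"
    proof (intro CollectI allI)
      fix z
      have "qscale c x z = c * (\<Sum>\<alpha><K. qinner p n (\<psi> \<alpha>) x * \<psi> \<alpha> z)"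
        using hx by (simp add: qscale_def)
      also have "\<dots> = (\<Sum>\<alpha><K. qinner p n (\<psi> \<alpha>) (qscale c x) * \<psi> \<alpha> z)"
        by (simp add: qinner_scale_right sum_distrib_left mult.assoc)
      finally show "qscale c x z = (\<Sum>\<alpha><K. qinner p n (\<psi> \<alpha>) (qscale c x) * \<psi> \<alpha> z)" .
    qed
  qed
  have base: "\<psi> ` {..<K} \<subseteq> ?T"
  proof
    fix w assume "w \<in> \<psi> ` {..<K}"
    then obtain \<beta> where b: "\<beta> < K" "w = \<psi> \<beta>" by auto
    have "(\<Sum>\<alpha><K. qinner p n (\<psi> \<alpha>) (\<psi> \<beta>) * \<psi> \<alpha> x) = \<psi> \<beta> x" for x
    proof -
      have "(\<Sum>\<alpha><K. qinner p n (\<psi> \<alpha>) (\<psi> \<beta>) * \<psi> \<alpha> x) = (\<Sum>\<alpha><K. (if \<alpha> = \<beta> then \<psi> \<alpha> x else 0))"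
        using b(1) by (intro sum.cong refl) (simp add: orth[rule_format])
      also have "\<dots> = \<psi> \<beta> x" using b by (simp add: sum.delta)
      finally show ?thesis .
    qed
    then show "w \<in> ?T" using b(2) by simp
  qed
  have "module.span qscale (\<psi> ` {..<K}) \<subseteq> ?T"
    by (rule module.span_minimal[OF qscale_mod base sub])
  with v have "v \<in> ?T" by (rule subsetD[rotated])
  then show ?thesis by (simp add: fun_eq_iff)
qed

lemma hilb_subspace: "module.subspace qscale (hilb p n)"
  unfolding module.subspace_def[OF qscale_mod] hilb_def qscale_def by auto

lemma span_hilb:
  assumes "\<forall>\<alpha><(K::nat). \<psi> \<alpha> \<in> hilb p n"
  shows "module.span qscale (\<psi> ` {..<K}) \<subseteq> hilb p n"
  using assms by (intro module.span_minimal[OF qscale_mod _ hilb_subspace]) auto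

lemma orth_inj:
  assumes orth: "\<forall>\<alpha><(K::nat). \<forall>\<beta><K. qinner p n (\<psi> \<alpha>) (\<psi> \<beta>) = (if \<alpha> = \<beta> then 1 else 0)"
  shows "inj_on \<psi> {..<K}"
proof
  fix a b assume ab: "a \<in> {..<K}" "b \<in> {..<K}" "\<psi> a = \<psi> b"
  have ak: "a < K" "b < K" using ab(1,2) by auto
  have e1: "qinner p n (\<psi> a) (\<psi> b) = (if a = b then 1 else 0)" by (rule orth[rule_format, OF ak])
  have "qinner p n (\<psi> b) (\<psi> b) = 1" using orth[rule_format, OF ak(2) ak(2)] by simp
  then have "qinner p n (\<psi> a) (\<psi> b) = 1" using ab(3) by simp
  moreover note e1
  ultimately show "a = b" by (auto split: if_splits)
qed

lemma orth_indep:
  assumes orth: "\<forall>\<alpha><(K::nat). \<forall>\<beta><K. qinner p n (\<psi> \<alpha>) (\<psi> \<beta>) = (if \<alpha> = \<beta> then 1 else 0)"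
  shows "\<not> module.dependent qscale (\<psi> ` {..<K})"
proof
  assume "module.dependent qscale (\<psi> ` {..<K})"
  moreover have fin: "finite (\<psi> ` {..<K})" by simp
  ultimately obtain u \<beta> where b: "\<beta> < K" "u (\<psi> \<beta>) \<noteq> 0"
    and s: "(\<Sum>v\<in>\<psi> ` {..<K}. qscale (u v) v) = 0"
    using module.dependent_finite[OF qscale_mod fin] by auto
  define w where "w = \<psi> \<beta>"
  have w: "u w \<noteq> 0" using b w_def by simp
  have inj: "inj_on \<psi> {..<K}" by (rule orth_inj[OF orth])
  have "(\<lambda>x. \<Sum>v\<in>\<psi> ` {..<K}. u v * v x) = 0"
    using s by (simp add: fun_eq_iff sum_fun_app qscale_def)
  then have "0 = qinner p n (\<psi> \<beta>) (\<lambda>x. \<Sum>v\<in>\<psi> ` {..<K}. u v * v x)"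
    by (simp add: qinner_zero_right)
  also have "\<dots> = (\<Sum>v\<in>\<psi> ` {..<K}. u v * qinner p n (\<psi> \<beta>) v)"
    by (rule qinner_lc_right) auto
  also have "\<dots> = (\<Sum>\<alpha><K. u (\<psi> \<alpha>) * qinner p n (\<psi> \<beta>) (\<psi> \<alpha>))"
    by (simp add: sum.reindex[OF inj])
  also have "\<dots> = (\<Sum>\<alpha><K. if \<alpha> = \<beta> then u (\<psi> \<alpha>) else 0)"
    using b(1) by (intro sum.cong refl) (simp add: orth[rule_format])
  also have "\<dots> = u w" using b by (simp add: sum.delta w_def)
  finally show False using w by simp
qed

lemma orth_dim:
  assumes orth: "\<forall>\<alpha><(K::nat). \<forall>\<beta><K. qinner p n (\<psi> \<alpha>) (\<psi> \<beta>) = (if \<alpha> = \<beta> then 1 else 0)"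
  shows "vector_space.dim qscale (module.span qscale (\<psi> ` {..<K})) = K"
proof -
  have "vector_space.dim qscale (module.span qscale (\<psi> ` {..<K})) = card (\<psi> ` {..<K})"
    by (rule vector_space.dim_span_eq_card_independent[OF qscale_vs orth_indep[OF orth]])
  also have "\<dots> = K" using orth_inj[OF orth] by (simp add: card_image)
  finally show ?thesis .
qed

lemma proj_apply:
  assumes orth: "\<forall>\<alpha><(K::nat). \<forall>\<beta><K. qinner p n (\<psi> \<alpha>) (\<psi> \<beta>) = (if \<alpha> = \<beta> then 1 else 0)"
    and P: "is_projection_onto p n (module.span qscale (\<psi> ` {..<K})) P"
    and v: "v \<in> hilb p n"
  shows "qapply p n P v = (\<lambda>x. \<Sum>\<alpha><K. qinner p n (\<psi> \<alpha>) v * \<psi> \<alpha> x)"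
proof -
  let ?C = "module.span qscale (\<psi> ` {..<K})"
  have PP: "\<forall>v\<in>hilb p n. qapply p n P v \<in> ?C \<and> (\<forall>w\<in>?C. qinner p n w (v - qapply p n P v) = 0)"
    using P unfolding is_projection_onto_def by (rule conjunct2)
  have inC: "qapply p n P v \<in> ?C" using PP[rule_format, OF v] by (rule conjunct1)
  have perp: "\<forall>w\<in>?C. qinner p n w (v - qapply p n P v) = 0" using PP[rule_format, OF v] by (rule conjunct2)
  have rep: "qapply p n P v = (\<lambda>x. \<Sum>\<alpha><K. qinner p n (\<psi> \<alpha>) (qapply p n P v) * \<psi> \<alpha> x)"
    by (rule span_repr[OF orth inC])
  have co: "qinner p n (\<psi> \<alpha>) (qapply p n P v) = qinner p n (\<psi> \<alpha>) v" if "\<alpha> < K" for \<alpha>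
  proof -
    have "\<psi> \<alpha> \<in> \<psi> ` {..<K}" using that by simp
    then have "\<psi> \<alpha> \<in> ?C" using module.span_superset[OF qscale_mod] by (rule subsetD[rotated])
    then have "qinner p n (\<psi> \<alpha>) (v - qapply p n P v) = 0" using perp by (simp only: Ball_def)
    then show ?thesis by (simp add: qinner_diff_right)
  qed
  have "(\<lambda>x. \<Sum>\<alpha><K. qinner p n (\<psi> \<alpha>) (qapply p n P v) * \<psi> \<alpha> x) = (\<lambda>x. \<Sum>\<alpha><K. qinner p n (\<psi> \<alpha>) v * \<psi> \<alpha> x)"
    by (intro ext sum.cong refl) (simp add: co)
  with rep show ?thesis by (rule trans)
qed

lemma qmult_ketbra_adj:
  "qmult p n (qmult p n F (ketbra \<Psi> \<Psi>)) (qadj F) x z =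
     (\<Sum>y\<in>cfgs p n. F x y * \<Psi> y) * cnj (\<Sum>y\<in>cfgs p n. F z y * \<Psi> y)"
proof -
  have 1: "qmult p n F (ketbra \<Psi> \<Psi>) x m = (\<Sum>y\<in>cfgs p n. F x y * \<Psi> y) * cnj (\<Psi> m)" for m
    unfolding qmult_def ketbra_def by (simp add: sum_distrib_right sum_distrib_left mult_ac)
  show ?thesis
    unfolding qmult_def[of p n "qmult p n F (ketbra \<Psi> \<Psi>)"] 1 qadj_def
    by (simp add: sum_distrib_left mult_ac)
qed

lemma kraus_ketbra:
  "kraus_channel p n J pr F (ketbra \<Psi> \<Psi>) =
    (\<lambda>x z. \<Sum>j\<in>J. complex_of_real (pr j) *
       ((\<Sum>y\<in>cfgs p n. F j x y * \<Psi> y) * cnj (\<Sum>y\<in>cfgs p n. F j z y * \<Psi> y)))"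
  unfolding kraus_channel_def qmult_ketbra_adj ..

lemma app_eq: "x \<in> cfgs p n \<Longrightarrow> (\<Sum>y\<in>cfgs p n. F x y * \<Psi> y) = qapply p n F \<Psi> x"
  unfolding qapply_def by simp

lemma trace_formula:
  assumes J: "finite J"
  shows "qtrace p n (qmult p n P (kraus_channel p n J pr F (ketbra \<Psi> \<Psi>))) =
    (\<Sum>j\<in>J. complex_of_real (pr j) * qinner p n (qapply p n (F j) \<Psi>) (qapply p n P (qapply p n (F j) \<Psi>)))"
proof -
  define a where "a j = qapply p n (F j) \<Psi>" for j
  let ?X = "cfgs p n"
  have "qtrace p n (qmult p n P (kraus_channel p n J pr F (ketbra \<Psi> \<Psi>))) =
     (\<Sum>x\<in>?X. \<Sum>y\<in>?X. P x y * (\<Sum>j\<in>J. complex_of_real (pr j) * (a j y * cnj (a j x))))"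
    unfolding qtrace_def qmult_def kraus_ketbra
    by (intro sum.cong refl) (simp add: app_eq a_def)
  also have "\<dots> = (\<Sum>j\<in>J. complex_of_real (pr j) * (\<Sum>x\<in>?X. cnj (a j x) * (\<Sum>y\<in>?X. P x y * a j y)))"
    by (simp add: sum_distrib_left sum_distrib_right mult_ac sum.swap[of _ J])
  also have "\<dots> = (\<Sum>j\<in>J. complex_of_real (pr j) * qinner p n (a j) (qapply p n P (a j)))"
    unfolding qinner_def qapply_def by simp
  finally show ?thesis by (simp add: a_def)
qed

lemma apply_formula:
  assumes J: "finite J"
  shows "qapply p n (kraus_channel p n J pr F (ketbra \<Psi> \<Psi>)) \<Psi> =
    (\<lambda>x. \<Sum>j\<in>J. (complex_of_real (pr j) * qinner p n (qapply p n (F j) \<Psi>) \<Psi>) * qapply p n (F j) \<Psi> x)"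
proof
  fix x
  define a where "a j = qapply p n (F j) \<Psi>" for j
  let ?X = "cfgs p n"
  show "qapply p n (kraus_channel p n J pr F (ketbra \<Psi> \<Psi>)) \<Psi> x =
    (\<Sum>j\<in>J. (complex_of_real (pr j) * qinner p n (qapply p n (F j) \<Psi>) \<Psi>) * qapply p n (F j) \<Psi> x)"
  proof (cases "x \<in> ?X")
    case False
    then show ?thesis by (simp add: qapply_def)
  next
    case True
    have "qapply p n (kraus_channel p n J pr F (ketbra \<Psi> \<Psi>)) \<Psi> x =
       (\<Sum>y\<in>?X. (\<Sum>j\<in>J. complex_of_real (pr j) * (a j x * cnj (a j y))) * \<Psi> y)"
    proof -
      have "qapply p n (kraus_channel p n J pr F (ketbra \<Psi> \<Psi>)) \<Psi> x =
        (\<Sum>y\<in>?X. (\<Sum>j\<in>J. complex_of_real (pr j) *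
       ((\<Sum>y'\<in>?X. F j x y' * \<Psi> y') * cnj (\<Sum>y'\<in>?X. F j y y' * \<Psi> y'))) * \<Psi> y)"
        unfolding kraus_ketbra qapply_def[of p n "\<lambda>x z. _ x z"] using True by simp
      also have "\<dots> = (\<Sum>y\<in>?X. (\<Sum>j\<in>J. complex_of_real (pr j) * (a j x * cnj (a j y))) * \<Psi> y)"
        by (intro sum.cong refl) (simp only: app_eq[OF True] app_eq a_def)
      finally show ?thesis .
    qed
    also have "\<dots> = (\<Sum>j\<in>J. (complex_of_real (pr j) * (\<Sum>y\<in>?X. cnj (a j y) * \<Psi> y)) * a j x)"
      by (simp add: sum_distrib_left sum_distrib_right mult_ac sum.swap[of _ J])
    finally show ?thesis by (simp add: a_def qinner_def)
  qed
qed

lemma sq_sum: "complex_of_real (\<Sum>\<alpha>\<in>A. (cmod (f \<alpha>))\<^sup>2) = (\<Sum>\<alpha>\<in>A. f \<alpha> * cnj (f \<alpha>))"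
  by (simp only: of_real_sum complex_norm_square)

lemma key_ineq:
  fixes c b :: "nat \<Rightarrow> complex" and E :: "nat \<Rightarrow> nat \<Rightarrow> complex" and K :: nat and lm :: complex
  assumes cn: "(\<Sum>\<alpha><K. (cmod (c \<alpha>))\<^sup>2) = 1"
    and Eb: "\<forall>\<alpha><K. \<forall>\<beta><K. cmod (E \<alpha> \<beta>) \<le> \<gamma>"
    and b: "\<forall>\<alpha><K. b \<alpha> = (\<Sum>\<beta><K. c \<beta> * ((if \<alpha> = \<beta> then lm else 0) + E \<alpha> \<beta>))"
  shows "(\<Sum>\<alpha><K. (cmod (b \<alpha>))\<^sup>2) - (cmod (\<Sum>\<alpha><K. cnj (c \<alpha>) * b \<alpha>))\<^sup>2 \<le> real K ^ 3 * \<gamma>\<^sup>2"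
proof -
  define e where "e \<alpha> = (\<Sum>\<beta><K. E \<alpha> \<beta> * c \<beta>)" for \<alpha>
  define S where "S = (\<Sum>\<alpha><K. cnj (c \<alpha>) * e \<alpha>)"
  have be: "b \<alpha> = lm * c \<alpha> + e \<alpha>" if "\<alpha> < K" for \<alpha>
  proof -
    have "b \<alpha> = (\<Sum>\<beta><K. (if \<alpha> = \<beta> then c \<beta> * lm else 0) + E \<alpha> \<beta> * c \<beta>)"
      unfolding b[rule_format, OF that] by (intro sum.cong refl) (auto simp: algebra_simps)
    also have "\<dots> = (\<Sum>\<beta><K. (if \<alpha> = \<beta> then c \<beta> * lm else 0)) + (\<Sum>\<beta><K. E \<alpha> \<beta> * c \<beta>)"
      by (rule sum.distrib)
    also have "\<dots> = lm * c \<alpha> + e \<alpha>" using that by (simp add: sum.delta e_def mult.commute)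
    finally show ?thesis .
  qed
  have cc: "(\<Sum>\<alpha><K. c \<alpha> * cnj (c \<alpha>)) = 1"
    using sq_sum[of c "{..<K}"] cn by simp
  have cS: "(\<Sum>\<alpha><K. c \<alpha> * cnj (e \<alpha>)) = cnj S" unfolding S_def by (simp add: mult.commute)
  have eS: "(\<Sum>\<alpha><K. e \<alpha> * cnj (c \<alpha>)) = S" unfolding S_def by (simp add: mult.commute)
  have s: "(\<Sum>\<alpha><K. cnj (c \<alpha>) * b \<alpha>) = lm + S"
  proof -
    have "(\<Sum>\<alpha><K. cnj (c \<alpha>) * b \<alpha>) = (\<Sum>\<alpha><K. lm * (c \<alpha> * cnj (c \<alpha>)) + cnj (c \<alpha>) * e \<alpha>)"
      using be by (intro sum.cong) (auto simp: algebra_simps)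
    also have "\<dots> = lm + S" using cc by (simp add: sum.distrib sum_distrib_left[symmetric] S_def)
    finally show ?thesis .
  qed
  have bb: "(\<Sum>\<alpha><K. b \<alpha> * cnj (b \<alpha>)) = lm * cnj lm + lm * cnj S + cnj lm * S + (\<Sum>\<alpha><K. e \<alpha> * cnj (e \<alpha>))"
  proof -
    have "(\<Sum>\<alpha><K. b \<alpha> * cnj (b \<alpha>)) = (\<Sum>\<alpha><K. lm * cnj lm * (c \<alpha> * cnj (c \<alpha>)) + lm * (c \<alpha> * cnj (e \<alpha>))
        + cnj lm * (e \<alpha> * cnj (c \<alpha>)) + e \<alpha> * cnj (e \<alpha>))"
      using be by (intro sum.cong) (auto simp: algebra_simps)
    also have "\<dots> = lm * cnj lm * (\<Sum>\<alpha><K. c \<alpha> * cnj (c \<alpha>)) + lm * (\<Sum>\<alpha><K. c \<alpha> * cnj (e \<alpha>))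
        + cnj lm * (\<Sum>\<alpha><K. e \<alpha> * cnj (c \<alpha>)) + (\<Sum>\<alpha><K. e \<alpha> * cnj (e \<alpha>))"
      by (simp add: sum.distrib sum_distrib_left)
    also have "\<dots> = lm * cnj lm + lm * cnj S + cnj lm * S + (\<Sum>\<alpha><K. e \<alpha> * cnj (e \<alpha>))"
      using cc cS eS by simp
    finally show ?thesis .
  qed
  have ident: "complex_of_real ((\<Sum>\<alpha><K. (cmod (b \<alpha>))\<^sup>2) - (cmod (\<Sum>\<alpha><K. cnj (c \<alpha>) * b \<alpha>))\<^sup>2)
      = complex_of_real ((\<Sum>\<alpha><K. (cmod (e \<alpha>))\<^sup>2) - (cmod S)\<^sup>2)"
  proof -
    have "complex_of_real ((\<Sum>\<alpha><K. (cmod (b \<alpha>))\<^sup>2) - (cmod (\<Sum>\<alpha><K. cnj (c \<alpha>) * b \<alpha>))\<^sup>2)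
      = (\<Sum>\<alpha><K. b \<alpha> * cnj (b \<alpha>)) - (\<Sum>\<alpha><K. cnj (c \<alpha>) * b \<alpha>) * cnj (\<Sum>\<alpha><K. cnj (c \<alpha>) * b \<alpha>)"
      by (simp only: of_real_diff sq_sum complex_norm_square)
    also have "\<dots> = (\<Sum>\<alpha><K. e \<alpha> * cnj (e \<alpha>)) - S * cnj S"
      unfolding bb s by (simp add: algebra_simps)
    also have "\<dots> = complex_of_real ((\<Sum>\<alpha><K. (cmod (e \<alpha>))\<^sup>2) - (cmod S)\<^sup>2)"
      by (simp only: of_real_diff sq_sum complex_norm_square)
    finally show ?thesis .
  qed
  then have eq: "(\<Sum>\<alpha><K. (cmod (b \<alpha>))\<^sup>2) - (cmod (\<Sum>\<alpha><K. cnj (c \<alpha>) * b \<alpha>))\<^sup>2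
      = (\<Sum>\<alpha><K. (cmod (e \<alpha>))\<^sup>2) - (cmod S)\<^sup>2"
    using of_real_eq_iff by blast
  have c1: "cmod (c \<beta>) \<le> 1" if "\<beta> < K" for \<beta>
  proof -
    have "(cmod (c \<beta>))\<^sup>2 \<le> (\<Sum>\<alpha><K. (cmod (c \<alpha>))\<^sup>2)"
      using that by (intro member_le_sum) auto
    then have "(cmod (c \<beta>))\<^sup>2 \<le> 1" using cn by simp
    then show ?thesis by (simp add: power_le_one_iff abs_square_le_1)
  qed
  have eb: "cmod (e \<alpha>) \<le> real K * \<gamma>" if "\<alpha> < K" for \<alpha>
  proof -
    have "cmod (e \<alpha>) \<le> (\<Sum>\<beta><K. cmod (E \<alpha> \<beta> * c \<beta>))" unfolding e_def by (rule norm_sum)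
    also have "\<dots> \<le> (\<Sum>\<beta><K. \<gamma>)"
    proof (intro sum_mono)
      fix \<beta> assume "\<beta> \<in> {..<K}"
      then have "cmod (E \<alpha> \<beta>) \<le> \<gamma>" "cmod (c \<beta>) \<le> 1" using Eb that c1 by auto
      then show "cmod (E \<alpha> \<beta> * c \<beta>) \<le> \<gamma>"
        by (simp add: norm_mult) (metis mult_left_le mult_mono norm_ge_zero order_trans mult.commute)
    qed
    finally show ?thesis by simp
  qed
  have "(\<Sum>\<alpha><K. (cmod (e \<alpha>))\<^sup>2) \<le> (\<Sum>\<alpha><K. (real K * \<gamma>)\<^sup>2)"
    using eb by (intro sum_mono power_mono) auto
  also have "\<dots> = real K ^ 3 * \<gamma>\<^sup>2" by (simp add: power2_eq_square power3_eq_cube)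
  finally show ?thesis using eq by (smt (verit) zero_le_power2)
qed

theorem corollary1:
  fixes p n k d K :: nat and \<gamma> \<delta> :: real and \<psi> :: "nat \<Rightarrow> qvec" and C :: "qvec set"
  assumes p_pos: "0 < p"
    and K_def: "K = p ^ k"
    and in_space: "\<forall>\<alpha><K. \<psi> \<alpha> \<in> hilb p n"
    and orthonormal: "\<forall>\<alpha><K. \<forall>\<beta><K. qinner p n (\<psi> \<alpha>) (\<psi> \<beta>) = (if \<alpha> = \<beta> then 1 else 0)"
    and C_span: "C = module.span qscale (\<psi> ` {..<K})"
    and gamma_pos: "\<gamma> > 0"
    and KL: "\<forall>F. d_local p n d F \<longrightarrow> (\<forall>\<alpha><K. \<forall>\<beta><K.
        cmod (qinner p n (\<psi> \<alpha>) (qapply p n F (\<psi> \<beta>))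
              - (if \<alpha> = \<beta> then 1 else 0) * qinner p n (\<psi> 0) (qapply p n F (\<psi> 0)))
          \<le> \<gamma> * opnorm p n F)"
    and delta_gt: "\<delta> > real K ^ 5 * \<gamma>\<^sup>2"
  shows "AQEDC p (real K ^ 5 * \<gamma>\<^sup>2 / \<delta>) \<delta> n k d C"
proof -
  let ?X = "cfgs p n"
  have K1: "K \<ge> 1" using p_pos K_def by simp
  have Chilb: "C \<subseteq> hilb p n" using span_hilb[OF in_space] C_span by simp
  have sub: "module.subspace qscale C" using C_span module.subspace_span[OF qscale_mod] by simp
  have dim: "vector_space.dim qscale C = p ^ k" using orth_dim[OF orthonormal] C_span K_def by simp
  define B where "B = real K ^ 5 * \<gamma>\<^sup>2"
  have B0: "B \<ge> 0" unfolding B_def by simp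
  have dpos: "\<delta> > 0" using delta_gt B0 B_def by linarith
  have main: "approx_detection_code p n (B / \<delta>) \<delta> (kraus_channel p n J pr F) C P"
    if P: "is_projection_onto p n C P" and adm: "admissible_noise p n d J pr F" for P and J :: "nat set" and pr F
  proof -
    have Jfin: "finite J" and pr0: "\<forall>j\<in>J. pr j \<ge> 0" and pr1: "(\<Sum>j\<in>J. pr j) = 1"
      and Floc: "\<forall>j\<in>J. d_local p n d (F j)" and Fnorm: "\<forall>j\<in>J. opnorm p n (F j) \<le> 1"
      using adm unfolding admissible_noise_def by auto
    have P': "is_projection_onto p n (module.span qscale (\<psi> ` {..<K})) P" using P C_span by simp
    show ?thesis unfolding approx_detection_code_def Let_def
    proof (intro ballI impI)
      fix \<Psi> assume \<Psi>C: "\<Psi> \<in> C" and \<Psi>n: "qnorm p n \<Psi> = 1"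
      define c where "c \<alpha> = qinner p n (\<psi> \<alpha>) \<Psi>" for \<alpha>
      define a where "a j = qapply p n (F j) \<Psi>" for j
      define b where "b j \<alpha> = qinner p n (\<psi> \<alpha>) (a j)" for j \<alpha>
      define s where "s j = (\<Sum>\<alpha><K. cnj (c \<alpha>) * b j \<alpha>)" for j
      have \<Psi>h: "\<Psi> \<in> hilb p n" using \<Psi>C Chilb by auto
      have \<Psi>r: "\<Psi> = (\<lambda>x. \<Sum>\<alpha><K. c \<alpha> * \<psi> \<alpha> x)"
        unfolding c_def by (rule span_repr[OF orthonormal]) (use \<Psi>C C_span in simp)
      have "qapply p n P \<Psi> = (\<lambda>x. \<Sum>\<alpha><K. c \<alpha> * \<psi> \<alpha> x)"
        unfolding c_def by (rule proj_apply[OF orthonormal P' \<Psi>h])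
      then have P\<Psi>: "qapply p n P \<Psi> = \<Psi>" using \<Psi>r[symmetric] by (rule trans)
      have ah: "a j \<in> hilb p n" for j unfolding a_def hilb_def qapply_def by simp
      have Pa: "qapply p n P (a j) = (\<lambda>x. \<Sum>\<alpha><K. b j \<alpha> * \<psi> \<alpha> x)" for j
        unfolding b_def by (rule proj_apply[OF orthonormal P' ah])
      have "qinner p n \<Psi> \<Psi> = complex_of_real (\<Sum>x\<in>?X. (cmod (\<Psi> x))\<^sup>2)"
        unfolding qinner_def sq_sum by (intro sum.cong refl) (rule mult.commute)
      moreover have "(\<Sum>x\<in>?X. (cmod (\<Psi> x))\<^sup>2) = 1"
        using \<Psi>n unfolding qnorm_def by (simp add: sum_nonneg)
      ultimately have \<Psi>\<Psi>: "qinner p n \<Psi> \<Psi> = 1" by simp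
      have "qinner p n \<Psi> \<Psi> = (\<Sum>\<alpha><K. cnj (c \<alpha>) * c \<alpha>)"
        by (subst (1) \<Psi>r, subst qinner_lc_left) (simp_all add: c_def)
      also have "\<dots> = complex_of_real (\<Sum>\<alpha><K. (cmod (c \<alpha>))\<^sup>2)"
        unfolding sq_sum by (intro sum.cong refl) (rule mult.commute)
      finally have h: "qinner p n \<Psi> \<Psi> = complex_of_real (\<Sum>\<alpha><K. (cmod (c \<alpha>))\<^sup>2)" .
      have "complex_of_real (\<Sum>\<alpha><K. (cmod (c \<alpha>))\<^sup>2) = 1" using h \<Psi>\<Psi> by (rule subst)
      then have cn: "(\<Sum>\<alpha><K. (cmod (c \<alpha>))\<^sup>2) = 1" by (rule of_real_eq_1_iff[THEN iffD1])
      have aPa: "qinner p n (a j) (qapply p n P (a j)) = complex_of_real (\<Sum>\<alpha><K. (cmod (b j \<alpha>))\<^sup>2)" for j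
      proof -
        have "qinner p n (a j) (qapply p n P (a j)) = (\<Sum>\<alpha><K. b j \<alpha> * qinner p n (a j) (\<psi> \<alpha>))"
          unfolding Pa by (rule qinner_lc_right) simp
        also have "\<dots> = complex_of_real (\<Sum>\<alpha><K. (cmod (b j \<alpha>))\<^sup>2)"
          unfolding sq_sum by (simp add: b_def qinner_cnj[of p n "a j"])
        finally show ?thesis .
      qed
      have \<Psi>Pa: "qinner p n \<Psi> (qapply p n P (a j)) = s j" for j
      proof -
        have "qinner p n \<Psi> (qapply p n P (a j)) = (\<Sum>\<alpha><K. b j \<alpha> * qinner p n \<Psi> (\<psi> \<alpha>))"
          unfolding Pa by (rule qinner_lc_right) simp
        then show ?thesis by (simp add: s_def c_def qinner_cnj[of p n \<Psi>] mult.commute)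
      qed
      have a\<Psi>: "qinner p n (a j) \<Psi> = cnj (s j)" for j
      proof -
        have "qinner p n \<Psi> (a j) = (\<Sum>\<alpha><K. cnj (c \<alpha>) * b j \<alpha>)"
          by (subst (1) \<Psi>r, subst qinner_lc_left) (simp_all add: b_def)
        then show ?thesis by (simp add: qinner_cnj[of p n "a j"] s_def)
      qed
      define T where "T = (\<Sum>j\<in>J. pr j * (\<Sum>\<alpha><K. (cmod (b j \<alpha>))\<^sup>2))"
      define Nn where "Nn = (\<Sum>j\<in>J. pr j * (cmod (s j))\<^sup>2)"
      have tr: "qtrace p n (qmult p n P (kraus_channel p n J pr F (ketbra \<Psi> \<Psi>))) = complex_of_real T"
        unfolding trace_formula[OF Jfin] T_def by (simp add: a_def[symmetric] aPa)
      have ap: "qapply p n (kraus_channel p n J pr F (ketbra \<Psi> \<Psi>)) \<Psi> =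
          (\<lambda>x. \<Sum>j\<in>J. (complex_of_real (pr j) * cnj (s j)) * a j x)"
        unfolding apply_formula[OF Jfin] by (simp add: a_def[symmetric] a\<Psi>)
      have num: "qinner p n \<Psi> (qapply p n (qmult p n (qmult p n P (kraus_channel p n J pr F (ketbra \<Psi> \<Psi>))) P) \<Psi>)
          = complex_of_real Nn"
      proof -
        have "qapply p n (qmult p n (qmult p n P (kraus_channel p n J pr F (ketbra \<Psi> \<Psi>))) P) \<Psi>
           = (\<lambda>x. \<Sum>j\<in>J. (complex_of_real (pr j) * cnj (s j)) * qapply p n P (a j) x)"
          by (simp add: qapply_qmult P\<Psi> ap qapply_lc[OF Jfin])
        then have "qinner p n \<Psi> (qapply p n (qmult p n (qmult p n P (kraus_channel p n J pr F (ketbra \<Psi> \<Psi>))) P) \<Psi>)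
           = (\<Sum>j\<in>J. (complex_of_real (pr j) * cnj (s j)) * s j)"
          by (simp add: qinner_lc_right[OF Jfin] \<Psi>Pa)
        also have "\<dots> = complex_of_real Nn"
          unfolding Nn_def of_real_sum
          by (intro sum.cong refl) (simp only: of_real_mult complex_norm_square, simp add: mult_ac)
        finally show ?thesis .
      qed
      have scal: "qapply p n (\<lambda>x y. z * M x y) \<Psi> = qscale z (qapply p n M \<Psi>)" for z M
        unfolding qapply_def qscale_def by (auto simp: fun_eq_iff sum_distrib_left mult.assoc)
      have jb: "(\<Sum>\<alpha><K. (cmod (b j \<alpha>))\<^sup>2) - (cmod (s j))\<^sup>2 \<le> real K ^ 3 * \<gamma>\<^sup>2" if j: "j \<in> J" for j
      proof -
        define lam where "lam = qinner p n (\<psi> 0) (qapply p n (F j) (\<psi> 0))"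
        define E where "E \<alpha> \<beta> = qinner p n (\<psi> \<alpha>) (qapply p n (F j) (\<psi> \<beta>)) - (if \<alpha> = \<beta> then 1 else 0) * lam" for \<alpha> \<beta>
        have Eb: "\<forall>\<alpha><K. \<forall>\<beta><K. cmod (E \<alpha> \<beta>) \<le> \<gamma>"
        proof (intro allI impI)
          fix \<alpha> \<beta> assume "\<alpha> < K" "\<beta> < K"
          then have "cmod (E \<alpha> \<beta>) \<le> \<gamma> * opnorm p n (F j)"
            using KL Floc j unfolding E_def lam_def by blast
          also have "\<dots> \<le> \<gamma>" using Fnorm j gamma_pos
            by (metis mult.right_neutral mult_left_mono less_le)
          finally show "cmod (E \<alpha> \<beta>) \<le> \<gamma>" .
        qed
        have bf: "\<forall>\<alpha><K. b j \<alpha> = (\<Sum>\<beta><K. c \<beta> * ((if \<alpha> = \<beta> then lam else 0) + E \<alpha> \<beta>))"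
        proof (intro allI impI)
          fix \<alpha> assume "\<alpha> < K"
          have "a j = (\<lambda>x. \<Sum>\<beta><K. c \<beta> * qapply p n (F j) (\<psi> \<beta>) x)"
            unfolding a_def by (subst \<Psi>r) (simp add: qapply_lc)
          then have "b j \<alpha> = (\<Sum>\<beta><K. c \<beta> * qinner p n (\<psi> \<alpha>) (qapply p n (F j) (\<psi> \<beta>)))"
            unfolding b_def by (simp add: qinner_lc_right)
          then show "b j \<alpha> = (\<Sum>\<beta><K. c \<beta> * ((if \<alpha> = \<beta> then lam else 0) + E \<alpha> \<beta>))"
            unfolding E_def by (auto intro!: sum.cong)
        qed
        show ?thesis unfolding s_def by (rule key_ineq[OF cn Eb bf])
      qed
      have TN: "T - Nn \<le> B"
      proof -
        have "T - Nn = (\<Sum>j\<in>J. pr j * ((\<Sum>\<alpha><K. (cmod (b j \<alpha>))\<^sup>2) - (cmod (s j))\<^sup>2))"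
          unfolding T_def Nn_def by (simp add: sum_subtractf[symmetric] algebra_simps)
        also have "\<dots> \<le> (\<Sum>j\<in>J. pr j * (real K ^ 3 * \<gamma>\<^sup>2))"
          using jb pr0 by (intro sum_mono mult_left_mono) auto
        also have "\<dots> = real K ^ 3 * \<gamma>\<^sup>2" using pr1 by (simp add: sum_distrib_right[symmetric])
        also have "\<dots> \<le> B" unfolding B_def
          using K1 by (intro mult_right_mono power_increasing) auto
        finally show ?thesis .
      qed
      assume "\<delta> \<le> Re (qtrace p n (qmult p n P (kraus_channel p n J pr F (ketbra \<Psi> \<Psi>))))"
      then have Td: "\<delta> \<le> T" using tr by simp
      have Tpos: "T > 0" using Td dpos by linarith
      have "1 - B / \<delta> \<le> 1 - B / T"
        using Td dpos B0 by (simp add: divide_left_mono)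
      also have "\<dots> \<le> Nn / T"
      proof -
        have "T * T \<le> (B + Nn) * T" using TN Tpos by (intro mult_right_mono) auto
        then show ?thesis using Tpos by (simp add: field_simps)
      qed
      also have "Nn / T = Re (qinner p n \<Psi> (qapply p n (\<lambda>x y. inverse (qtrace p n (qmult p n P (kraus_channel p n J pr F (ketbra \<Psi> \<Psi>)))) *
             qmult p n (qmult p n P (kraus_channel p n J pr F (ketbra \<Psi> \<Psi>))) P x y) \<Psi>))"
      proof -
        have "qinner p n \<Psi> (qapply p n (\<lambda>x y. inverse (qtrace p n (qmult p n P (kraus_channel p n J pr F (ketbra \<Psi> \<Psi>)))) *
             qmult p n (qmult p n P (kraus_channel p n J pr F (ketbra \<Psi> \<Psi>))) P x y) \<Psi>) = complex_of_real (inverse T * Nn)"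
          by (simp only: scal qinner_scale_right num tr of_real_mult of_real_inverse)
        then have "Re (qinner p n \<Psi> (qapply p n (\<lambda>x y. inverse (qtrace p n (qmult p n P (kraus_channel p n J pr F (ketbra \<Psi> \<Psi>)))) *
             qmult p n (qmult p n P (kraus_channel p n J pr F (ketbra \<Psi> \<Psi>))) P x y) \<Psi>)) = inverse T * Nn"
          by (simp only: Re_complex_of_real)
        then show ?thesis by (metis divide_inverse mult.commute)
      qed
      finally show "1 - B / \<delta> \<le> Re (qinner p n \<Psi> (qapply p n (\<lambda>x y. inverse (qtrace p n (qmult p n P (kraus_channel p n J pr F (ketbra \<Psi> \<Psi>)))) *
             qmult p n (qmult p n P (kraus_channel p n J pr F (ketbra \<Psi> \<Psi>))) P x y) \<Psi>))" .
    qed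
  qed
  show ?thesis unfolding AQEDC_def B_def[symmetric]
    using Chilb sub dim main by blast
qed

end
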